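(* Let $\mathcal{Y}=\{1,\dots,k\}$ be a finite label set, $L\in\mathbb{R}^{k\times k}$ a task loss matrix with nonnegative entries, $\Phi:\mathbb{R}^k\times\mathcal{Y}\to\mathbb{R}$ a surrogate loss that is continuous and bounded from below, and $\mathcal{F}\subseteq\mathbb{R}^k$ a subspace of allowed score vectors. Let $H_{\Phi,L,\mathcal{F}}$ be the calibration function and let $\check H_{\Phi,L,\mathcal{F}}:[0,+\infty)\to[0,+\infty]$ be a convex non-decreasing function with $\check H_{\Phi,L,\mathcal{F}}(\varepsilon)\le H_{\Phi,L,\mathcal{F}}(\varepsilon)$ for all $\varepsilon\ge 0$. Then for any $\varepsilon>0$ such that $\check H_{\Phi,L,\mathcal{F}}(\varepsilon)$ is finite and any score function $f\in\mathcal{F}_{\mathcal{F}}$, $$\mathcal{R}_\Phi(f)<\mathcal{R}^*_{\Phi,\mathcal{F}}+\check H_{\Phi,L,\mathcal{F}}(\varepsilon)\ \Longrightarrow\ \mathcal{R}_L(f)<\mathcal{R}^*_{L,\mathcal{F}}+\varepsilon,$$ where $\mathcal{R}^*_{\Phi,\mathcal{F}}=\inf_{g\in\mathcal{F}_{\mathcal{F}}}\mathcal{R}_\Phi(g)$ and $\mathcal{R}^*_{L,\mathcal{F}}=\inf_{g\in\mathcal{F}_{\mathcal{F}}}\mathcal{R}_L(g)$.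
   Context: Predictor: for $f\in\mathbb{R}^k$, $\mathrm{pred}(f)$ is the smallest index $c$ among those maximizing $f_c$. For $q$ in the probability simplex $\Delta_k$, the conditional risk is $\ell(f,q)=\sum_{c=1}^k q_c L(\mathrm{pred}(f),c)$ and the conditional surrogate risk is $\phi(f,q)=\sum_{c=1}^k q_c\Phi(f,c)$; their excesses are $\delta\ell(f,q)=\ell(f,q)-\inf_{\hat f\in\mathcal{F}}\ell(\hat f,q)$ and $\delta\phi(f,q)=\phi(f,q)-\inf_{\hat f\in\mathcal{F}}\phi(\hat f,q)$. The calibration function is, for $\varepsilon\ge0$, $H_{\Phi,L,\mathcal{F}}(\varepsilon)=\inf\{\delta\phi(f,q): f\in\mathcal{F}, q\in\Delta_k, \delta\ell(f,q)\ge\varepsilon\}$, set to $+\infty$ if the feasible set is empty. Data: $(x,y)$ are drawn from a distribution $\mathcal{D}$ on $\mathcal{X}\times\mathcal{Y}$; $\mathcal{F}_{\mathcal{F}}$ is the set of all Borel measurable functions $f:\mathcal{X}\to\mathcal{F}$; $\mathcal{R}_L(f)=\mathbb{E}_{(x,y)\sim\mathcal{D}}L(\mathrm{pred}(f(x)),y)$ and $\mathcal{R}_\Phi(f)=\mathbb{E}_{(x,y)\sim\mathcal{D}}\Phi(f(x),y)$. *)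

theory Defs
  imports "HOL-Probability.Probability"
begin

text \<open>Labels are the elements of a finite linearly ordered type 'k (so Y = {1..k}
  with k = CARD('k)); score vectors are elements of real^'k.\<close>

definition pred :: "real ^ 'k::{finite,linorder} \<Rightarrow> 'k::{finite,linorder}" where
  "pred f = (LEAST c. \<forall>c'. f $ c' \<le> f $ c)"

definition prob_simplex :: "(real ^ 'k::finite) set" where
  "prob_simplex = {q. (\<forall>c. 0 \<le> q $ c) \<and> (\<Sum>c\<in>UNIV. q $ c) = 1}"

definition cond_risk :: "('k::{finite,linorder} \<Rightarrow> 'k::{finite,linorder} \<Rightarrow> real) \<Rightarrow> real ^ 'k::{finite,linorder} \<Rightarrow> real ^ 'k::{finite,linorder} \<Rightarrow> real" where
  "cond_risk L f q = (\<Sum>c\<in>UNIV. q $ c * L (pred f) c)"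

definition cond_surr :: "(real ^ 'k::finite \<Rightarrow> 'k::finite \<Rightarrow> real) \<Rightarrow> real ^ 'k::finite \<Rightarrow> real ^ 'k::finite \<Rightarrow> real" where
  "cond_surr Phi f q = (\<Sum>c\<in>UNIV. q $ c * Phi f c)"

definition excess_risk :: "('k::{finite,linorder} \<Rightarrow> 'k::{finite,linorder} \<Rightarrow> real) \<Rightarrow> (real ^ 'k::{finite,linorder}) set \<Rightarrow> real ^ 'k::{finite,linorder} \<Rightarrow> real ^ 'k::{finite,linorder} \<Rightarrow> real" where
  "excess_risk L F f q = cond_risk L f q - (INF g\<in>F. cond_risk L g q)"

definition excess_surr :: "(real ^ 'k::finite \<Rightarrow> 'k::finite \<Rightarrow> real) \<Rightarrow> (real ^ 'k::finite) set \<Rightarrow> real ^ 'k::finite \<Rightarrow> real ^ 'k::finite \<Rightarrow> real" where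
  "excess_surr Phi F f q = cond_surr Phi f q - (INF g\<in>F. cond_surr Phi g q)"

text \<open>Calibration function; Inf of the empty set of ereals is +\<infinity>.\<close>
definition calib :: "(real ^ 'k::{finite,linorder} \<Rightarrow> 'k::{finite,linorder} \<Rightarrow> real) \<Rightarrow> ('k::{finite,linorder} \<Rightarrow> 'k::{finite,linorder} \<Rightarrow> real) \<Rightarrow> (real ^ 'k::{finite,linorder}) set \<Rightarrow> real \<Rightarrow> ereal" where
  "calib Phi L F eps = Inf {ereal (excess_surr Phi F f q) | f q.
       f \<in> F \<and> q \<in> prob_simplex \<and> excess_risk L F f q \<ge> eps}"

definition eexp :: "'a measure \<Rightarrow> ('a \<Rightarrow> real) \<Rightarrow> ereal" where
  "eexp M g = enn2ereal (\<integral>\<^sup>+ z. ennreal (g z) \<partial>M) - enn2ereal (\<integral>\<^sup>+ z. ennreal (- g z) \<partial>M)"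

definition score_funs :: "'x measure \<Rightarrow> (real ^ 'k::finite) set \<Rightarrow> ('x \<Rightarrow> real ^ 'k::finite) set" where
  "score_funs MX F = {f. f \<in> borel_measurable MX \<and> (\<forall>x\<in>space MX. f x \<in> F)}"

definition risk_L :: "('x \<times> 'k::{finite,linorder}) measure \<Rightarrow> ('k::{finite,linorder} \<Rightarrow> 'k::{finite,linorder} \<Rightarrow> real) \<Rightarrow> ('x \<Rightarrow> real ^ 'k::{finite,linorder}) \<Rightarrow> ereal" where
  "risk_L D L f = eexp D (\<lambda>(x, y). L (pred (f x)) y)"

definition risk_Phi :: "('x \<times> 'k::finite) measure \<Rightarrow> (real ^ 'k::finite \<Rightarrow> 'k::finite \<Rightarrow> real) \<Rightarrow> ('x \<Rightarrow> real ^ 'k::finite) \<Rightarrow> ereal" where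
  "risk_Phi D Phi f = eexp D (\<lambda>(x, y). Phi (f x) y)"

definition ereal_convex_nonneg :: "(real \<Rightarrow> ereal) \<Rightarrow> bool" where
  "ereal_convex_nonneg H \<longleftrightarrow> (\<forall>x\<ge>0. \<forall>y\<ge>0. \<forall>t\<in>{0..1::real}.
      H ((1 - t) * x + t * y) \<le> ereal (1 - t) * H x + ereal t * H y)"

end

theory Submission
  imports Defs
begin

lemma disint:
  fixes D :: "('x \<times> 'k::finite) measure" and MX :: "'x measure"
  assumes D_prob: "prob_space D" and D_sets: "sets D = sets (MX \<Otimes>\<^sub>M count_space UNIV)"
  obtains qf :: "'k \<Rightarrow> 'x \<Rightarrow> real" where
   "\<And>c. qf c \<in> borel_measurable MX"
   "\<And>x c. x \<in> space MX \<Longrightarrow> 0 \<le> qf c x"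
   "\<And>x. x \<in> space MX \<Longrightarrow> (\<Sum>c\<in>UNIV. qf c x) = 1"
   "\<And>h. h \<in> borel_measurable (MX \<Otimes>\<^sub>M count_space UNIV) \<Longrightarrow>
       (\<integral>\<^sup>+z. h z \<partial>D) = (\<integral>\<^sup>+x. (\<Sum>c\<in>UNIV. ennreal (qf c x) * h (x,c)) \<partial>(distr D MX fst))"
proof -
  define P where "P = distr D MX fst"
  have fstm: "fst \<in> measurable D MX"
    using measurable_cong_sets[OF D_sets refl] measurable_fst by blast
  have meas_D: "\<And>N h. h \<in> measurable (MX \<Otimes>\<^sub>M count_space UNIV) N \<Longrightarrow> h \<in> measurable D N"
    using measurable_cong_sets[OF D_sets refl] by blast
  interpret D: prob_space D by fact
  interpret P: prob_space P unfolding P_def by (rule D.prob_space_distr[OF fstm])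
  have sP: "sets P = sets MX" "space P = space MX" unfolding P_def by auto
  define N where "N c = distr (density D (indicator {z. snd z = c})) MX fst" for c
  have indm: "indicator {z. snd z = c} \<in> borel_measurable D" for c :: 'k
    apply (rule meas_D) by measurable
  have sN: "sets (N c) = sets P" for c unfolding N_def sP by simp
  have ac: "absolutely_continuous P (N c)" for c
    unfolding absolutely_continuous_def
  proof
    fix A assume A: "A \<in> null_sets P"
    then have As: "A \<in> sets MX" using sP by auto
    have "emeasure D (fst -` A \<inter> space D) = 0"
      using null_setsD1[OF A] As unfolding P_def by (simp add: emeasure_distr fstm)
    moreover have Sm: "fst -` A \<inter> space D \<in> sets D" using fstm As by measurable
    ultimately have "emeasure (density D (indicator {z. snd z = c})) (fst -` A \<inter> space D) = 0"
      using absolutely_continuousI_density[OF indm[of c]] unfolding absolutely_continuous_def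
      by (meson null_setsD1 null_setsI subsetD)
    then have "emeasure (N c) A = 0" unfolding N_def
      by (simp add: emeasure_distr fstm As)
    then show "A \<in> null_sets (N c)" using As sN sP by (auto simp: null_sets_def)
  qed
  define RN where "RN c = RN_deriv P (N c)" for c
  have RNm: "RN c \<in> borel_measurable MX" for c
    unfolding RN_def using borel_measurable_RN_deriv[of P "N c"] measurable_cong_sets[OF sP(1) refl] by blast
  have key: "(\<integral>\<^sup>+z. h z \<partial>D) = (\<integral>\<^sup>+x. (\<Sum>c\<in>UNIV. RN c x * h (x,c)) \<partial>P)"
    if hm: "h \<in> borel_measurable (MX \<Otimes>\<^sub>M count_space UNIV)" for h
  proof -
    have hc: "(\<lambda>x. h (x,c)) \<in> borel_measurable MX" for c using hm by measurable
    have hcP: "(\<lambda>x. h (x,c)) \<in> borel_measurable P" for c using hc measurable_cong_sets[OF sP(1) refl] by blast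
    have "(\<integral>\<^sup>+z. h z \<partial>D) = (\<integral>\<^sup>+z. (\<Sum>c\<in>UNIV. indicator {z. snd z = c} z * h (fst z, c)) \<partial>D)"
    proof (rule nn_integral_cong)
      fix z :: "'x \<times> 'k"
      have "(\<Sum>c\<in>UNIV. indicator {z. snd z = c} z * h (fst z, c)) = (\<Sum>c\<in>UNIV. if c = snd z then h (fst z, c) else 0)"
        by (rule sum.cong) (auto simp: indicator_def)
      also have "\<dots> = h z" by (simp add: sum.delta')
      finally show "h z = (\<Sum>c\<in>UNIV. indicator {z. snd z = c} z * h (fst z, c))" by simp
    qed
    also have "\<dots> = (\<Sum>c\<in>UNIV. \<integral>\<^sup>+z. indicator {z. snd z = c} z * h (fst z, c) \<partial>D)"
      apply (rule nn_integral_sum) apply (rule meas_D) using hm by measurable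
    also have "\<dots> = (\<Sum>c\<in>UNIV. \<integral>\<^sup>+x. h (x, c) \<partial>N c)"
    proof (rule sum.cong[OF refl])
      fix c
      have "(\<integral>\<^sup>+x. h (x, c) \<partial>N c) = (\<integral>\<^sup>+z. h (fst z, c) \<partial>density D (indicator {z. snd z = c}))"
        unfolding N_def by (rule nn_integral_distr) (auto simp: fstm hc)
      also have "\<dots> = (\<integral>\<^sup>+z. indicator {z. snd z = c} z * h (fst z, c) \<partial>D)"
        by (rule nn_integral_density) (auto intro: indm measurable_compose[OF fstm hc])
      finally show "(\<integral>\<^sup>+z. indicator {z. snd z = c} z * h (fst z, c) \<partial>D) = (\<integral>\<^sup>+x. h (x, c) \<partial>N c)" by simp
    qed
    also have "\<dots> = (\<Sum>c\<in>UNIV. \<integral>\<^sup>+x. RN c x * h (x, c) \<partial>P)"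
      unfolding RN_def by (rule sum.cong[OF refl], rule P.RN_deriv_nn_integral[OF ac sN hcP])
    also have "\<dots> = (\<integral>\<^sup>+x. (\<Sum>c\<in>UNIV. RN c x * h (x,c)) \<partial>P)"
      apply (rule nn_integral_sum[symmetric])
      using RNm hc measurable_cong_sets[OF sP(1) refl] by (metis borel_measurable_times_ennreal)
    finally show ?thesis .
  qed
  have AE1: "AE x in P. (\<Sum>c\<in>UNIV. RN c x) = 1"
  proof (rule P.density_unique_finite_measure)
    show "(\<lambda>x. \<Sum>c\<in>UNIV. RN c x) \<in> borel_measurable P"
      using RNm measurable_cong_sets[OF sP(1) refl] by (metis borel_measurable_sum)
    show "(\<lambda>x. 1) \<in> borel_measurable P" by simp
    fix A assume A: "A \<in> sets P"
    have Am: "A \<in> sets MX" using A sP by simp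
    have hm: "(\<lambda>z. indicator A (fst z) :: ennreal) \<in> borel_measurable (MX \<Otimes>\<^sub>M count_space UNIV)"
      using Am by measurable
    have "(\<integral>\<^sup>+x. (\<Sum>c\<in>UNIV. RN c x) * indicator A x \<partial>P) = (\<integral>\<^sup>+x. (\<Sum>c\<in>UNIV. RN c x * indicator A (fst (x,c))) \<partial>P)"
      by (simp add: sum_distrib_right)
    also have "\<dots> = (\<integral>\<^sup>+z. indicator A (fst z) \<partial>D)" using key[OF hm] by simp
    also have "\<dots> = (\<integral>\<^sup>+x. indicator A x \<partial>P)" unfolding P_def
      by (rule nn_integral_distr[symmetric]) (use fstm Am in auto)
    finally show "(\<integral>\<^sup>+x. (\<Sum>c\<in>UNIV. RN c x) * indicator A x \<partial>P) = (\<integral>\<^sup>+x. 1 * indicator A x \<partial>P)" by simp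
  qed auto
  define G where "G = {x\<in>space MX. (\<Sum>c\<in>UNIV. RN c x) = 1}"
  have Gm: "G \<in> sets MX" unfolding G_def using RNm by measurable
  define qf where "qf c x = (if x \<in> G then enn2real (RN c x) else 1 / real CARD('k))" for c x
  have fin: "RN c x < top" if "x \<in> G" for c x
  proof -
    have "RN c x \<le> (\<Sum>c\<in>UNIV. RN c x)" by (rule member_le_sum) auto
    then have "RN c x \<le> 1" using that unfolding G_def by simp
    then show ?thesis using le_less_trans[OF _ ennreal_one_less_top] by auto
  qed
  show ?thesis
  proof (rule that)
    show "qf c \<in> borel_measurable MX" for c unfolding qf_def using Gm RNm by measurable
    show "0 \<le> qf c x" for c x unfolding qf_def by auto
    show "(\<Sum>c\<in>UNIV. qf c x) = 1" if "x \<in> space MX" for x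
    proof (cases "x \<in> G")
      case True
      then have "(\<Sum>c\<in>UNIV. qf c x) = (\<Sum>c\<in>UNIV. enn2real (RN c x))" unfolding qf_def by simp
      also have "\<dots> = enn2real (\<Sum>c\<in>UNIV. RN c x)" using fin[OF True]
        by (subst enn2real_sum) auto
      also have "\<dots> = 1" using True unfolding G_def by simp
      finally show ?thesis .
    qed (simp add: qf_def)
    fix h :: "'x \<times> 'k \<Rightarrow> ennreal" assume hm: "h \<in> borel_measurable (MX \<Otimes>\<^sub>M count_space UNIV)"
    have "AE x in P. x \<in> G" using AE1 by (rule AE_mp) (auto simp: G_def sP)
    then have "(\<integral>\<^sup>+x. (\<Sum>c\<in>UNIV. RN c x * h (x,c)) \<partial>P) = (\<integral>\<^sup>+x. (\<Sum>c\<in>UNIV. ennreal (qf c x) * h (x,c)) \<partial>P)"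
      by (rule nn_integral_cong_AE[OF AE_mp]) (auto simp: qf_def ennreal_enn2real[OF fin])
    then show "(\<integral>\<^sup>+z. h z \<partial>D) = (\<integral>\<^sup>+x. (\<Sum>c\<in>UNIV. ennreal (qf c x) * h (x,c)) \<partial>distr D MX fst)"
      using key[OF hm] unfolding P_def by simp
  qed
qed

lemma eexp_shift:
  fixes u :: "'a \<Rightarrow> real"
  assumes P: "prob_space M" and um: "u \<in> borel_measurable M" and lb: "\<And>z. z \<in> space M \<Longrightarrow> B \<le> u z"
  shows "eexp M u = ereal B + enn2ereal (\<integral>\<^sup>+z. ennreal (u z - B) \<partial>M)"
proof -
  interpret prob_space M by fact
  have "(\<integral>\<^sup>+z. ennreal (- u z) \<partial>M) \<le> (\<integral>\<^sup>+z. ennreal (- B) \<partial>M)"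
    by (rule nn_integral_mono) (use lb in \<open>auto intro: ennreal_leI\<close>)
  also have "\<dots> = ennreal (- B)" by (simp add: emeasure_space_1)
  finally have negfin: "(\<integral>\<^sup>+z. ennreal (- u z) \<partial>M) < top"
    using ennreal_less_top by (rule le_less_trans)
  have uBm: "(\<lambda>z. u z - B) \<in> borel_measurable M" using um by measurable
  show ?thesis
  proof (cases "integrable M u")
    case True
    have posfin: "(\<integral>\<^sup>+z. ennreal (u z) \<partial>M) < top"
    proof -
      have "(\<integral>\<^sup>+z. ennreal (u z) \<partial>M) \<le> (\<integral>\<^sup>+z. ennreal (norm (u z)) \<partial>M)"
        by (rule nn_integral_mono) (auto intro: ennreal_leI)
      then show ?thesis using integrableD(2)[OF True] by (simp add: less_top)
    qed
    have "eexp M u = ereal (integral\<^sup>L M u)"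
    proof -
      have e: "enn2ereal x = ereal (enn2real x)" if "x < top" for x :: ennreal
        using that by (metis enn2ereal_ennreal enn2real_nonneg ennreal_enn2real)
      show ?thesis unfolding eexp_def real_lebesgue_integral_def[OF True]
        using e[OF posfin] e[OF negfin] by simp
    qed
    moreover have "(\<integral>\<^sup>+z. ennreal (u z - B) \<partial>M) = ennreal (integral\<^sup>L M (\<lambda>z. u z - B))"
      by (rule nn_integral_eq_integral) (use True lb in auto)
    moreover have "integral\<^sup>L M (\<lambda>z. u z - B) = integral\<^sup>L M u - B"
      using True by (simp add: prob_space)
    moreover have "integral\<^sup>L M u - B \<ge> 0"
    proof -
      have "integral\<^sup>L M (\<lambda>z. u z - B) \<ge> 0" by (rule integral_nonneg_AE) (use lb in auto)
      then show ?thesis using True by (simp add: prob_space)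
    qed
    ultimately show ?thesis by simp
  next
    case False
    have inf1: "(\<integral>\<^sup>+z. ennreal (u z - B) \<partial>M) = top"
    proof (rule ccontr)
      assume "(\<integral>\<^sup>+z. ennreal (u z - B) \<partial>M) \<noteq> top"
      then have "integrable M (\<lambda>z. u z - B)"
        by (intro integrableI_nonneg uBm) (use lb in \<open>auto simp: top.not_eq_extremum\<close>)
      then have "integrable M (\<lambda>z. (u z - B) + B)" by (rule Bochner_Integration.integrable_add) simp
      then show False using False by simp
    qed
    have inf2: "(\<integral>\<^sup>+z. ennreal (u z) \<partial>M) = top"
    proof (rule ccontr)
      assume a: "(\<integral>\<^sup>+z. ennreal (u z) \<partial>M) \<noteq> top"
      have "(\<integral>\<^sup>+z. ennreal (u z - B) \<partial>M) \<le> (\<integral>\<^sup>+z. ennreal (u z) + ennreal (- B) \<partial>M)"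
      proof (rule nn_integral_mono)
        fix z assume "z \<in> space M"
        show "ennreal (u z - B) \<le> ennreal (u z) + ennreal (- B)"
        proof -
          have "ennreal (u z - B) \<le> ennreal (max 0 (u z) + max 0 (- B))" by (rule ennreal_leI) simp
          also have "\<dots> = ennreal (max 0 (u z)) + ennreal (max 0 (- B))" by (rule ennreal_plus) auto
          finally show ?thesis by (simp add: ennreal_max_0)
        qed
      qed
      also have "\<dots> = (\<integral>\<^sup>+z. ennreal (u z) \<partial>M) + ennreal (- B)"
        using um by (subst nn_integral_add) (auto simp: emeasure_space_1)
      finally show False using a inf1 by (simp add: top_unique)
    qed
    show ?thesis unfolding eexp_def using inf1 inf2 negfin
      by (simp add: top.not_eq_extremum)
  qed
qed

lemma chord_alg:
  fixes u e w au ae aw :: real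
  assumes "u < e" "e < w" and h: "(w - u) * ae \<le> (w - e) * au + (e - u) * aw"
  shows "(ae - au) / (e - u) \<le> (aw - ae) / (w - e)"
proof -
  have "(ae - au) * (w - e) \<le> (aw - ae) * (e - u)" using h by (simp add: algebra_simps)
  then show ?thesis using assms by (simp add: divide_simps mult.commute)
qed

lemma three_chord:
  fixes H :: "real \<Rightarrow> ereal"
  assumes conv: "ereal_convex_nonneg H"
    and u: "0 \<le> u" "u < e" "e < w" and fu: "\<bar>H u\<bar> \<noteq> \<infinity>" and fe: "\<bar>H e\<bar> \<noteq> \<infinity>" and fw: "\<bar>H w\<bar> \<noteq> \<infinity>"
  shows "(real_of_ereal (H e) - real_of_ereal (H u)) / (e - u) \<le> (real_of_ereal (H w) - real_of_ereal (H e)) / (w - e)"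
proof -
  define t where "t = (e - u) / (w - u)"
  have t01: "t \<in> {0..1}" using u unfolding t_def by (auto simp: divide_simps)
  have tw: "t * (w - u) = e - u" using u unfolding t_def by simp
  have "(1 - t) * u + t * w = u + t * (w - u)" by (simp add: algebra_simps)
  then have et: "(1 - t) * u + t * w = e" using tw by simp
  have "H ((1 - t) * u + t * w) \<le> ereal (1 - t) * H u + ereal t * H w"
    using conv t01 u unfolding ereal_convex_nonneg_def by auto
  also have "\<dots> = ereal ((1 - t) * real_of_ereal (H u) + t * real_of_ereal (H w))"
    using fu fw by (metis ereal_real' plus_ereal.simps(1) times_ereal.simps(1))
  finally have "real_of_ereal (H e) \<le> (1 - t) * real_of_ereal (H u) + t * real_of_ereal (H w)"
    using fe et by (metis ereal_less_eq(3) ereal_real')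
  then have "(w - u) * real_of_ereal (H e) \<le> (w - u) * ((1 - t) * real_of_ereal (H u) + t * real_of_ereal (H w))"
    using u by (intro mult_left_mono) auto
  also have "\<dots> = (w - e) * real_of_ereal (H u) + (e - u) * real_of_ereal (H w)"
  proof -
    have a: "(w - u) * t = e - u" using tw by (simp add: mult.commute)
    have b: "(w - u) * (1 - t) = w - e" using a by (simp add: algebra_simps)
    have "(w - u) * ((1 - t) * real_of_ereal (H u) + t * real_of_ereal (H w)) =
       ((w - u) * (1 - t)) * real_of_ereal (H u) + ((w - u) * t) * real_of_ereal (H w)"
      by (simp add: algebra_simps)
    then show ?thesis using a b by simp
  qed
  finally show ?thesis by (rule chord_alg[OF u(2,3)])
qed

lemma support:
  fixes H :: "real \<Rightarrow> ereal"
  assumes conv: "ereal_convex_nonneg H"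
    and mono: "\<And>a b. 0 \<le> a \<Longrightarrow> a \<le> b \<Longrightarrow> H a \<le> H b"
    and nonneg: "\<And>e. 0 \<le> e \<Longrightarrow> 0 \<le> H e"
    and eps: "0 < eps" "eps < z0" and fz0: "\<bar>H z0\<bar> \<noteq> \<infinity>"
  shows "\<exists>s\<ge>0. \<forall>e\<ge>0. ereal (real_of_ereal (H eps) + s * (e - eps)) \<le> H e"
proof -
  define h where "h e = real_of_ereal (H e)" for e
  have fin: "\<bar>H e\<bar> \<noteq> \<infinity>" if "0 \<le> e" "H e < \<infinity>" for e
    using nonneg[OF that(1)] that(2) by auto
  have fin_le: "\<bar>H e\<bar> \<noteq> \<infinity>" if "0 \<le> e" "e \<le> z0" for e
    using mono[OF that] fz0 nonneg[OF that(1)] by auto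
  have Heps: "H eps = ereal (h eps)" using fin_le[of eps] eps unfolding h_def by (simp add: ereal_real')
  define S where "S = {(h e - h eps) / (e - eps) | e. eps < e \<and> H e < \<infinity>}"
  have "H z0 < \<infinity>" using fz0 by (cases "H z0") auto
  then have Sne: "S \<noteq> {}" unfolding S_def using eps by auto
  have lowb: "(h eps - h 0) / (eps - 0) \<le> x" if "x \<in> S" for x
  proof -
    obtain e where x: "x = (h e - h eps) / (e - eps)" "eps < e" "H e < \<infinity>" using \<open>x \<in> S\<close> unfolding S_def by auto
    show ?thesis unfolding x(1) h_def
      by (rule three_chord[OF conv]) (use eps x fin fin_le in auto)
  qed
  have bdd: "bdd_below S" using lowb by (auto simp: bdd_below_def)
  define s where "s = Inf S"
  have s0: "0 \<le> s" unfolding s_def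
  proof (rule cInf_greatest[OF Sne])
    fix x assume "x \<in> S"
    then obtain e where x: "x = (h e - h eps) / (e - eps)" "eps < e" "H e < \<infinity>" unfolding S_def by auto
    have "H eps \<le> H e" using mono eps x by auto
    then have "h eps \<le> h e" using fin[of e] x eps Heps unfolding h_def
      by (metis ereal_less_eq(3) ereal_real' less_le_not_le less_trans)
    then show "0 \<le> x" using x by auto
  qed
  have main: "ereal (h eps + s * (e - eps)) \<le> H e" if e0: "0 \<le> e" for e
  proof (cases "H e < \<infinity>")
    case False then have "H e = \<infinity>" by (cases "H e") auto
    then show ?thesis by simp
  next
    case True
    have He: "H e = ereal (h e)" using fin[OF e0 True] unfolding h_def by (simp add: ereal_real')
    have "h eps + s * (e - eps) \<le> h e"
    proof (cases e eps rule: linorder_cases)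
      case greater
      have "s \<le> (h e - h eps) / (e - eps)" unfolding s_def
        by (rule cInf_lower[OF _ bdd]) (use greater True in \<open>auto simp: S_def\<close>)
      then have "s * (e - eps) \<le> h e - h eps" using greater by (simp add: pos_le_divide_eq)
      then show ?thesis by simp
    next
      case equal then show ?thesis by simp
    next
      case less
      have "(h eps - h e) / (eps - e) \<le> s" unfolding s_def
      proof (rule cInf_greatest[OF Sne])
        fix x assume "x \<in> S"
        then obtain w where x: "x = (h w - h eps) / (w - eps)" "eps < w" "H w < \<infinity>" unfolding S_def by auto
        show "(h eps - h e) / (eps - e) \<le> x" unfolding x(1) h_def
          by (rule three_chord[OF conv]) (use eps x fin fin_le less e0 in auto)
      qed
      then have "h eps - h e \<le> s * (eps - e)" using less by (simp add: pos_divide_le_eq)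
      then show ?thesis by (simp add: algebra_simps)
    qed
    then show ?thesis using He by simp
  qed
  show ?thesis using s0 main unfolding h_def by blast
qed

primrec sel :: "(nat \<Rightarrow> 'v) \<Rightarrow> ('v \<Rightarrow> 'x \<Rightarrow> real) \<Rightarrow> nat \<Rightarrow> 'x \<Rightarrow> 'v" where
  "sel t c 0 x = t 0"
| "sel t c (Suc m) x = (if c (t (Suc m)) x < c (sel t c m x) x then t (Suc m) else sel t c m x)"

lemma sel_val: "\<exists>n. sel t c m x = t n"
  by (induction m) auto

lemma sel_dec: "c (sel t c (Suc m) x) x \<le> c (sel t c m x) x"
  by auto

lemma sel_le: "n \<le> m \<Longrightarrow> c (sel t c m x) x \<le> c (t n) x"
proof (induction m)
  case 0 then show ?case by simp
next
  case (Suc m)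
  show ?case
  proof (cases "n = Suc m")
    case True then show ?thesis by auto
  next
    case False then have "n \<le> m" using Suc.prems by simp
    then show ?thesis using Suc.IH sel_dec[of c t m x] by linarith
  qed
qed

lemma sel_meas:
  assumes tm: "\<And>n. (\<lambda>x. t n) \<in> measurable M N"
    and cm: "\<And>g. g \<in> measurable M N \<Longrightarrow> (\<lambda>x. c (g x) x) \<in> borel_measurable M"
  shows "sel t c m \<in> measurable M N"
proof (induction m)
  case 0 then show ?case using tm[of 0] by (simp add: sel.simps(1)[abs_def])
next
  case (Suc m)
  have eq: "sel t c (Suc m) = (\<lambda>x. if c (t (Suc m)) x < c (sel t c m x) x then t (Suc m) else sel t c m x)"
    by (rule ext) simp
  have p: "{x \<in> space M. c (t (Suc m)) x < c (sel t c m x) x} \<in> sets M"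
    using cm[OF tm[of "Suc m"]] cm[OF Suc.IH] by measurable
  show ?case unfolding eq by (rule measurable_If[OF tm Suc.IH p])
qed

lemma dense_INF:
  fixes F :: "('a::{metric_space, second_countable_topology}) set"
  assumes "F \<noteq> {}"
  shows "\<exists>t :: nat \<Rightarrow> 'a. (\<forall>n. t n \<in> F) \<and>
    (\<forall>phi :: 'a \<Rightarrow> real. continuous_on UNIV phi \<longrightarrow> bdd_below (phi ` F) \<longrightarrow>
        (INF g\<in>F. phi g) = (INF n. phi (t n)))"
proof -
  obtain T where T: "countable T" "T \<subseteq> F" "F \<subseteq> closure T" by (rule separable)
  have Tne: "T \<noteq> {}" using T assms by auto
  define t where "t = from_nat_into T"
  have tT: "t n \<in> T" for n unfolding t_def using Tne by (rule from_nat_into)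
  have rT: "range t = T" unfolding t_def using T(1) Tne by (metis range_from_nat_into)
  show ?thesis
  proof (intro exI[of _ t] conjI allI impI)
    show "t n \<in> F" for n using tT T by auto
    fix phi :: "'a \<Rightarrow> real" assume cont: "continuous_on UNIV phi" and bdd: "bdd_below (phi ` F)"
    have bddt: "bdd_below (range (\<lambda>n. phi (t n)))"
      using bdd tT T(2) by (auto simp: bdd_below_def)
    show "(INF g\<in>F. phi g) = (INF n. phi (t n))"
    proof (rule antisym)
      show "(INF g\<in>F. phi g) \<le> (INF n. phi (t n))"
        by (rule cINF_greatest) (use tT T(2) bdd in \<open>auto intro: cINF_lower\<close>)
      show "(INF n. phi (t n)) \<le> (INF g\<in>F. phi g)"
      proof (rule cINF_greatest[OF assms])
        fix g assume gF: "g \<in> F"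
        show "(INF n. phi (t n)) \<le> phi g"
        proof (rule field_le_epsilon)
          fix d :: real assume d: "0 < d"
          obtain r where r: "r > 0" "\<And>y. dist y g < r \<Longrightarrow> dist (phi y) (phi g) < d"
            using cont d unfolding continuous_on_iff by (meson UNIV_I)
          have "g \<in> closure T" using gF T by auto
          then obtain y where y: "y \<in> T" "dist y g < r" using r(1) unfolding closure_approachable by blast
          then obtain n where n: "t n = y" using rT by auto
          have "(INF n. phi (t n)) \<le> phi (t n)" by (rule cINF_lower[OF bddt]) simp
          also have "\<dots> \<le> phi g + d" using r(2)[OF y(2)] n by (auto simp: dist_real_def)
          finally show "(INF n. phi (t n)) \<le> phi g + d" .
        qed
      qed
    qed
  qed
qed

lemma pred_eq_iff: "pred v = c \<longleftrightarrow> (\<forall>c'. v $ c' \<le> v $ c) \<and> (\<forall>d. d < c \<longrightarrow> (\<exists>c'. v $ d < v $ c'))"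
proof -
  define S where "S = {c. \<forall>c'. v $ c' \<le> v $ c}"
  have Sne: "S \<noteq> {}"
  proof -
    have "finite ((\<lambda>c. v $ c) ` UNIV)" by simp
    then have "Max ((\<lambda>c. v $ c) ` UNIV) \<in> (\<lambda>c. v $ c) ` UNIV" by (rule Max_in) simp
    then obtain m where m: "v $ m = Max ((\<lambda>c. v $ c) ` UNIV)" by (metis (no_types) rangeE)
    have "v $ c' \<le> v $ m" for c' unfolding m by (rule Max_ge) auto
    then show ?thesis unfolding S_def by auto
  qed
  have fS: "finite S" by simp
  have pm: "pred v = Min S" unfolding pred_def
  proof (rule Least_equality)
    show "\<forall>c'. v $ c' \<le> v $ Min S" using Min_in[OF fS Sne] unfolding S_def by auto
    show "\<And>y. \<forall>c'. v $ c' \<le> v $ y \<Longrightarrow> Min S \<le> y" using fS unfolding S_def by (auto intro: Min_le)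
  qed
  show ?thesis unfolding pm Min_eq_iff[OF fS Sne] unfolding S_def
    by (auto simp: not_le[symmetric])
qed

lemma pred_meas: "(pred :: real ^ 'k::{finite,linorder} \<Rightarrow> 'k) \<in> measurable borel (count_space UNIV)"
proof (rule measurable_count_space_eq_countable[THEN iffD2])
  show "countable (UNIV :: 'k set)" by simp
  show "pred \<in> space borel \<rightarrow> UNIV \<and> (\<forall>a\<in>UNIV. pred -` {a} \<inter> space borel \<in> sets borel)"
  proof (intro conjI ballI)
    fix a
    have eq: "pred -` {a} \<inter> space borel = {v. (\<forall>c'\<in>UNIV. v $ c' \<le> (v $ a :: real)) \<and> (\<forall>d\<in>UNIV. d < a \<longrightarrow> (\<exists>c'\<in>UNIV. v $ d < v $ c'))}"
      using pred_eq_iff[of _ a] by auto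
    have "{v. (\<forall>c'\<in>UNIV. v $ c' \<le> (v $ a :: real)) \<and> (\<forall>d\<in>UNIV. d < a \<longrightarrow> (\<exists>c'\<in>UNIV. v $ d < v $ c'))} \<in> sets borel"
      by measurable
    then show "pred -` {a} \<inter> space borel \<in> sets borel" using eq by simp
  qed simp
qed

theorem theorem2:
  fixes L :: "'k::{finite,linorder} \<Rightarrow> 'k::{finite,linorder} \<Rightarrow> real"
    and Phi :: "real ^ 'k::{finite,linorder} \<Rightarrow> 'k::{finite,linorder} \<Rightarrow> real"
    and F :: "(real ^ 'k::{finite,linorder}) set"
    and MX :: "'x measure"
    and D :: "('x \<times> 'k::{finite,linorder}) measure"
    and Hc :: "real \<Rightarrow> ereal"
    and eps :: real
    and f :: "'x \<Rightarrow> real ^ 'k::{finite,linorder}"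
  assumes L_nonneg: "\<And>c y. 0 \<le> L c y"
    and Phi_cont: "\<And>y. continuous_on UNIV (\<lambda>g. Phi g y)"
    and Phi_bdd: "\<exists>B. \<forall>g y. B \<le> Phi g y"
    and F_subspace: "subspace F"
    and D_prob: "prob_space D"
    and D_sets: "sets D = sets (MX \<Otimes>\<^sub>M count_space UNIV)"
    and Hc_nonneg: "\<And>e. 0 \<le> e \<Longrightarrow> 0 \<le> Hc e"
    and Hc_mono: "\<And>a b. 0 \<le> a \<Longrightarrow> a \<le> b \<Longrightarrow> Hc a \<le> Hc b"
    and Hc_convex: "ereal_convex_nonneg Hc"
    and Hc_le: "\<And>e. 0 \<le> e \<Longrightarrow> Hc e \<le> calib Phi L F e"
    and eps_pos: "0 < eps"
    and Hc_fin: "\<bar>Hc eps\<bar> \<noteq> \<infinity>"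
    and f_score: "f \<in> score_funs MX F"
    and small_surr: "risk_Phi D Phi f < (INF g\<in>score_funs MX F. risk_Phi D Phi g) + Hc eps"
  shows "risk_L D L f < (INF g\<in>score_funs MX F. risk_L D L g) + ereal eps"
proof (rule ccontr)
  assume contra: "\<not> (risk_L D L f < (INF g\<in>score_funs MX F. risk_L D L g) + ereal eps)"
  obtain B where B: "\<And>g y. B \<le> Phi g y" using Phi_bdd by blast
  interpret D: prob_space D by (rule D_prob)
  obtain qf :: "'k \<Rightarrow> 'x \<Rightarrow> real" where qm: "\<And>c. qf c \<in> borel_measurable MX"
     and q0: "\<And>x c. x \<in> space MX \<Longrightarrow> 0 \<le> qf c x" and q1: "\<And>x. x \<in> space MX \<Longrightarrow> (\<Sum>c\<in>UNIV. qf c x) = 1"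
     and qint0: "\<And>h. h \<in> borel_measurable (MX \<Otimes>\<^sub>M count_space UNIV) \<Longrightarrow>
        (\<integral>\<^sup>+z. h z \<partial>D) = (\<integral>\<^sup>+x. (\<Sum>c\<in>UNIV. ennreal (qf c x) * h (x,c)) \<partial>(distr D MX fst))"
    by (rule disint[OF D_prob D_sets]) blast
  define P where "P = distr D MX fst"
  note qint = qint0[folded P_def]
  have fstm: "fst \<in> measurable D MX" using measurable_cong_sets[OF D_sets refl] measurable_fst by blast
  interpret P: prob_space P unfolding P_def by (rule D.prob_space_distr[OF fstm])
  have sP: "sets P = sets MX" "space P = space MX" unfolding P_def by auto
  have mP: "\<And>h. h \<in> borel_measurable MX \<Longrightarrow> h \<in> borel_measurable P"
    using measurable_cong_sets[OF sP(1) refl] by blast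
  define Q where "Q x = (\<chi> c. qf c x)" for x
  have QS: "Q x \<in> prob_simplex" if "x \<in> space MX" for x
    unfolding prob_simplex_def Q_def using q0[OF that] q1[OF that] by auto
  define SF where "SF = score_funs MX F"
  have SFm: "g \<in> borel_measurable MX" if "g \<in> SF" for g using that unfolding SF_def score_funs_def by auto
  have SFF: "g x \<in> F" if "g \<in> SF" "x \<in> space MX" for g x using that unfolding SF_def score_funs_def by auto
  have fSF: "f \<in> SF" using f_score unfolding SF_def .
  have zF: "0 \<in> F" using F_subspace by (rule subspace_0)
  have Fne: "F \<noteq> {}" using zF by auto
  have Phim: "(\<lambda>v. Phi v c) \<in> borel_measurable borel" for c using Phi_cont by (rule borel_measurable_continuous_onI)
  define sX where "sX g x = cond_surr Phi (g x) (Q x)" for g x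
  define lX where "lX g x = cond_risk L (g x) (Q x)" for g x
  have sX_eq: "sX g x = (\<Sum>c\<in>UNIV. qf c x * Phi (g x) c)" for g x unfolding sX_def cond_surr_def Q_def by simp
  have lX_eq: "lX g x = (\<Sum>c\<in>UNIV. qf c x * L (pred (g x)) c)" for g x unfolding lX_def cond_risk_def Q_def by simp
  have sXm: "sX g \<in> borel_measurable MX" if gm: "g \<in> borel_measurable MX" for g
  proof -
    have "(\<lambda>x. Phi (g x) c) \<in> borel_measurable MX" for c using measurable_compose[OF gm Phim] by simp
    then have "(\<lambda>x. \<Sum>c\<in>UNIV. qf c x * Phi (g x) c) \<in> borel_measurable MX"
      by (intro borel_measurable_sum borel_measurable_times qm)
    then show ?thesis by (simp add: sX_eq[abs_def])
  qed
  have lXm: "lX g \<in> borel_measurable MX" if gm: "g \<in> borel_measurable MX" for g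
  proof -
    have pg: "(\<lambda>x. pred (g x)) \<in> measurable MX (count_space UNIV)" using measurable_compose[OF gm pred_meas] by simp
    have "(\<lambda>x. L (pred (g x)) c) \<in> borel_measurable MX" for c
      by (rule measurable_compose_countable'[OF _ pg, where f="\<lambda>i x. L i c"]) auto
    then have "(\<lambda>x. \<Sum>c\<in>UNIV. qf c x * L (pred (g x)) c) \<in> borel_measurable MX"
      by (intro borel_measurable_sum borel_measurable_times qm)
    then show ?thesis by (simp add: lX_eq[abs_def])
  qed
  have riskPhi: "risk_Phi D Phi g = ereal B + enn2ereal (\<integral>\<^sup>+x. ennreal (sX g x - B) \<partial>P)"
    if gm: "g \<in> borel_measurable MX" for g
  proof -
    define u where "u = (\<lambda>(x,y). Phi (g x) y)"
    have um2: "u \<in> borel_measurable (MX \<Otimes>\<^sub>M count_space UNIV)"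
    proof -
      have "(\<lambda>z. (\<lambda>i z. Phi (g (fst z)) i) (snd z) z) \<in> borel_measurable (MX \<Otimes>\<^sub>M count_space UNIV)"
        by (rule measurable_compose_countable'[where I=UNIV])
          (auto intro: measurable_compose[OF measurable_fst measurable_compose[OF gm Phim]])
      then show ?thesis unfolding u_def by (simp add: split_beta')
    qed
    have umD: "u \<in> borel_measurable D" using um2 measurable_cong_sets[OF D_sets refl] by blast
    have "risk_Phi D Phi g = eexp D u" unfolding risk_Phi_def u_def ..
    also have "\<dots> = ereal B + enn2ereal (\<integral>\<^sup>+z. ennreal (u z - B) \<partial>D)"
      by (rule eexp_shift[OF D_prob umD]) (auto simp: u_def B split: prod.splits)
    also have "(\<integral>\<^sup>+z. ennreal (u z - B) \<partial>D) = (\<integral>\<^sup>+x. (\<Sum>c\<in>UNIV. ennreal (qf c x) * ennreal (u (x,c) - B)) \<partial>P)"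
      by (rule qint) (use um2 in measurable)
    also have "\<dots> = (\<integral>\<^sup>+x. ennreal (sX g x - B) \<partial>P)"
    proof (rule nn_integral_cong)
      fix x assume "x \<in> space P"
      then have x: "x \<in> space MX" using sP by simp
      have "(\<Sum>c\<in>UNIV. ennreal (qf c x) * ennreal (u (x,c) - B)) = (\<Sum>c\<in>UNIV. ennreal (qf c x * (Phi (g x) c - B)))"
        using q0[OF x] B by (intro sum.cong refl) (simp add: u_def ennreal_mult)
      also have "\<dots> = ennreal (\<Sum>c\<in>UNIV. qf c x * (Phi (g x) c - B))"
        using q0[OF x] B by (intro sum_ennreal) simp
      also have "(\<Sum>c\<in>UNIV. qf c x * (Phi (g x) c - B)) = sX g x - B"
      proof -
        have "(\<Sum>c\<in>UNIV. qf c x * (Phi (g x) c - B)) = (\<Sum>c\<in>UNIV. qf c x * Phi (g x) c) - (\<Sum>c\<in>UNIV. qf c x) * B"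
          by (simp add: right_diff_distrib sum_subtractf sum_distrib_right)
        then show ?thesis using q1[OF x] by (simp add: sX_eq)
      qed
      finally show "(\<Sum>c\<in>UNIV. ennreal (qf c x) * ennreal (u (x,c) - B)) = ennreal (sX g x - B)" .
    qed
    finally show ?thesis .
  qed
  have riskL: "risk_L D L g = enn2ereal (\<integral>\<^sup>+x. ennreal (lX g x) \<partial>P)"
    if gm: "g \<in> borel_measurable MX" for g
  proof -
    define u where "u = (\<lambda>(x,y). L (pred (g x)) y)"
    have pg: "(\<lambda>x. pred (g x)) \<in> measurable MX (count_space UNIV)" using measurable_compose[OF gm pred_meas] by simp
    have um2: "u \<in> borel_measurable (MX \<Otimes>\<^sub>M count_space UNIV)"
    proof -
      have Lc: "(\<lambda>x. L (pred (g x)) c) \<in> borel_measurable MX" for c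
        by (rule measurable_compose_countable'[OF _ pg, where f="\<lambda>i x. L i c"]) auto
      have "(\<lambda>z. (\<lambda>i z. L (pred (g (fst z))) i) (snd z) z) \<in> borel_measurable (MX \<Otimes>\<^sub>M count_space UNIV)"
        by (rule measurable_compose_countable'[where I=UNIV])
          (auto intro: measurable_compose[OF measurable_fst Lc])
      then show ?thesis unfolding u_def by (simp add: split_beta')
    qed
    have umD: "u \<in> borel_measurable D" using um2 measurable_cong_sets[OF D_sets refl] by blast
    have "risk_L D L g = eexp D u" unfolding risk_L_def u_def ..
    also have "\<dots> = ereal 0 + enn2ereal (\<integral>\<^sup>+z. ennreal (u z - 0) \<partial>D)"
      by (rule eexp_shift[OF D_prob umD]) (auto simp: u_def L_nonneg split: prod.splits)
    also have "(\<integral>\<^sup>+z. ennreal (u z - 0) \<partial>D) = (\<integral>\<^sup>+x. (\<Sum>c\<in>UNIV. ennreal (qf c x) * ennreal (u (x,c) - 0)) \<partial>P)"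
      by (rule qint) (use um2 in measurable)
    also have "\<dots> = (\<integral>\<^sup>+x. ennreal (lX g x) \<partial>P)"
    proof (rule nn_integral_cong)
      fix x assume "x \<in> space P"
      then have x: "x \<in> space MX" using sP by simp
      have "(\<Sum>c\<in>UNIV. ennreal (qf c x) * ennreal (u (x,c) - 0)) = (\<Sum>c\<in>UNIV. ennreal (qf c x * L (pred (g x)) c))"
        using q0[OF x] L_nonneg by (intro sum.cong refl) (simp add: u_def ennreal_mult)
      also have "\<dots> = ennreal (\<Sum>c\<in>UNIV. qf c x * L (pred (g x)) c)"
        using q0[OF x] L_nonneg by (intro sum_ennreal) simp
      finally show "(\<Sum>c\<in>UNIV. ennreal (qf c x) * ennreal (u (x,c) - 0)) = ennreal (lX g x)" by (simp add: lX_eq)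
    qed
    finally show ?thesis by simp
  qed
  define Ls where "Ls = (\<Sum>a\<in>UNIV. \<Sum>b\<in>UNIV. L a b)"
  have L_le: "L a b \<le> Ls" for a b
  proof -
    have "L a b \<le> (\<Sum>b\<in>UNIV. L a b)" by (rule member_le_sum) (auto simp: L_nonneg)
    also have "\<dots> \<le> Ls" unfolding Ls_def by (rule member_le_sum) (auto intro: sum_nonneg simp: L_nonneg)
    finally show ?thesis .
  qed
  have cr_bnd: "0 \<le> cond_risk L h (Q x) \<and> cond_risk L h (Q x) \<le> Ls" if x: "x \<in> space MX" for h x
  proof
    show "0 \<le> cond_risk L h (Q x)" unfolding cond_risk_def Q_def using q0[OF x] L_nonneg by (auto intro: sum_nonneg)
    have "cond_risk L h (Q x) \<le> (\<Sum>c\<in>UNIV. qf c x * Ls)" unfolding cond_risk_def Q_def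
      using q0[OF x] L_le by (auto intro!: sum_mono mult_left_mono)
    also have "\<dots> = Ls" using q1[OF x] by (simp add: sum_distrib_right[symmetric])
    finally show "cond_risk L h (Q x) \<le> Ls" .
  qed
  have cs_lb: "B \<le> cond_surr Phi h (Q x)" if x: "x \<in> space MX" for h x
  proof -
    have "B = (\<Sum>c\<in>UNIV. qf c x * B)" using q1[OF x] by (simp add: sum_distrib_right[symmetric])
    also have "\<dots> \<le> cond_surr Phi h (Q x)" unfolding cond_surr_def Q_def
      using q0[OF x] B by (auto intro!: sum_mono mult_left_mono)
    finally show ?thesis .
  qed
  have lX_int: "integrable P (lX g)" if gm: "g \<in> borel_measurable MX" for g
    by (rule P.integrable_const_bound[where B=Ls]) (use cr_bnd lXm[OF gm] mP sP in \<open>auto simp: lX_def\<close>)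
  have riskL_int: "risk_L D L g = ereal (\<integral>x. lX g x \<partial>P)" if gm: "g \<in> borel_measurable MX" for g
  proof -
    have "(\<integral>\<^sup>+x. ennreal (lX g x) \<partial>P) = ennreal (\<integral>x. lX g x \<partial>P)"
      by (rule nn_integral_eq_integral[OF lX_int[OF gm]]) (use cr_bnd sP in \<open>auto simp: lX_def\<close>)
    moreover have "0 \<le> (\<integral>x. lX g x \<partial>P)"
      by (rule integral_nonneg_AE) (use cr_bnd sP in \<open>auto simp: lX_def\<close>)
    ultimately show ?thesis using riskL[OF gm] by simp
  qed
  have riskPhi_int: "risk_Phi D Phi g = ereal (\<integral>x. sX g x \<partial>P)"
    if gm: "g \<in> borel_measurable MX" and gi: "integrable P (sX g)" for g
  proof -
    have gi': "integrable P (\<lambda>x. sX g x - B)" by (rule Bochner_Integration.integrable_diff[OF gi]) simp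
    have "(\<integral>\<^sup>+x. ennreal (sX g x - B) \<partial>P) = ennreal (\<integral>x. sX g x - B \<partial>P)"
      by (rule nn_integral_eq_integral[OF gi']) (use cs_lb sP in \<open>auto simp: sX_def\<close>)
    moreover have "(\<integral>x. sX g x - B \<partial>P) = (\<integral>x. sX g x \<partial>P) - B"
      using gi by (simp add: P.prob_space)
    moreover have "0 \<le> (\<integral>x. sX g x - B \<partial>P)"
      by (rule integral_nonneg_AE) (use cs_lb sP in \<open>auto simp: sX_def\<close>)
    ultimately show ?thesis using riskPhi[OF gm] by simp
  qed
  define IL where "IL x = (INF h\<in>F. cond_risk L h (Q x))" for x
  define kL where "kL x c' = (\<Sum>c\<in>UNIV. qf c x * L c' c)" for x c'
  have IL_eq: "IL x = Min ((\<lambda>c'. kL x c') ` (pred ` F))" for x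
  proof -
    have "(\<lambda>h. cond_risk L h (Q x)) ` F = (\<lambda>c'. kL x c') ` (pred ` F)"
      unfolding cond_risk_def Q_def kL_def by (auto simp: image_image)
    then have "IL x = Inf ((\<lambda>c'. kL x c') ` (pred ` F))" unfolding IL_def by simp
    also have "\<dots> = Min ((\<lambda>c'. kL x c') ` (pred ` F))"
      by (rule cInf_eq_Min) (use Fne in auto)
    finally show ?thesis .
  qed
  have ILm: "IL \<in> borel_measurable MX"
  proof -
    have "(\<lambda>x. kL x i) \<in> borel_measurable MX" for i unfolding kL_def
      by (intro borel_measurable_sum borel_measurable_times qm) simp
    then have "(\<lambda>x. Min ((\<lambda>i. kL x i) ` (pred ` F))) \<in> borel_measurable MX"
      by (intro borel_measurable_Min) auto
    then show ?thesis by (simp add: IL_eq[abs_def])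
  qed
  have IL_le: "IL x \<le> cond_risk L h (Q x)" if "x \<in> space MX" "h \<in> F" for x h
    unfolding IL_def by (rule cINF_lower) (use cr_bnd[OF that(1)] that(2) in \<open>auto simp: bdd_below_def\<close>)
  have IL_ge: "0 \<le> IL x" if "x \<in> space MX" for x
    unfolding IL_def by (rule cINF_greatest[OF Fne]) (use cr_bnd[OF that] in auto)
  have IL_int: "integrable P IL"
  proof (rule P.integrable_const_bound[where B=Ls])
    show "AE x in P. norm (IL x) \<le> Ls"
    proof (rule AE_I2)
      fix x assume "x \<in> space P"
      then have x: "x \<in> space MX" using sP by simp
      have "IL x \<le> Ls" using IL_le[OF x zF] cr_bnd[OF x, of 0] by linarith
      then show "norm (IL x) \<le> Ls" using IL_ge[OF x] by simp
    qed
    show "IL \<in> borel_measurable P" using ILm mP by blast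
  qed
  define IS where "IS x = (INF h\<in>F. cond_surr Phi h (Q x))" for x
  obtain t where tt: "(\<forall>n::nat. t n \<in> F) \<and> (\<forall>phi. continuous_on UNIV phi \<longrightarrow> bdd_below (phi ` F) \<longrightarrow>
        (INF g\<in>F. phi g) = (INF n::nat. phi (t n) :: real))"
    using dense_INF[OF Fne] by (rule exE)
  have tF: "\<And>n. t n \<in> F" using tt by simp
  have tINF: "\<And>phi. continuous_on UNIV phi \<Longrightarrow> bdd_below (phi ` F) \<Longrightarrow>
        (INF g\<in>F. phi g) = (INF n. phi (t n) :: real)" using tt by simp
  define cc where "cc h x = cond_surr Phi h (Q x)" for h x
  have IS_t: "IS x = (INF n. cc (t n) x)" if x: "x \<in> space MX" for x
  proof -
    have "continuous_on UNIV (\<lambda>h. cond_surr Phi h (Q x))" unfolding cond_surr_def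
      by (intro continuous_intros Phi_cont)
    moreover have "bdd_below ((\<lambda>h. cond_surr Phi h (Q x)) ` F)"
      using cs_lb[OF x] by (auto simp: bdd_below_def)
    ultimately show ?thesis unfolding IS_def cc_def by (rule tINF)
  qed
  define gs where "gs m = sel t cc m" for m
  have cc_sX: "cc (g x) x = sX g x" for g x unfolding cc_def sX_def ..
  have gsm: "gs m \<in> borel_measurable MX" for m unfolding gs_def
    by (rule sel_meas) (auto simp: cc_sX sXm)
  have gsSF: "gs m \<in> SF" for m
  proof -
    have "gs m x \<in> F" for x using sel_val[of t cc m x] tF unfolding gs_def by metis
    then show ?thesis unfolding SF_def score_funs_def using gsm by blast
  qed
  have gs_lb: "B \<le> sX (gs m) x" if "x \<in> space MX" for m x unfolding sX_def using cs_lb[OF that] .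
  have gs_ub: "sX (gs m) x \<le> cc (t 0) x" for m x
    using sel_le[of 0 m cc t x] unfolding gs_def cc_sX by simp
  define K where "K = (\<Sum>c\<in>UNIV. \<bar>Phi (t 0) c\<bar>)"
  have cc0: "cc (t 0) x \<le> K" if x: "x \<in> space MX" for x
  proof -
    have "cc (t 0) x \<le> (\<Sum>c\<in>UNIV. qf c x * K)" unfolding cc_def cond_surr_def Q_def
    proof (intro sum_mono mult_left_mono)
      fix c
      have "Phi (t 0) c \<le> \<bar>Phi (t 0) c\<bar>" by simp
      also have "\<dots> \<le> K" unfolding K_def by (rule member_le_sum) auto
      finally show "(\<chi> c. qf c x) $ c * Phi (t 0) c \<le> qf c x * K" using q0[OF x]
        by (simp add: mult_left_mono)
    qed
    also have "\<dots> = K" using q1[OF x] by (simp add: sum_distrib_right[symmetric])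
    finally show ?thesis .
  qed
  have gs_bnd: "norm (sX (gs m) x) \<le> \<bar>B\<bar> + K" if x: "x \<in> space MX" for m x
  proof -
    have K0: "0 \<le> K" unfolding K_def by (simp add: sum_nonneg)
    show ?thesis unfolding real_norm_def abs_le_iff
      using gs_lb[OF x, of m] gs_ub[of m x] cc0[OF x] K0 abs_ge_self[of B] abs_ge_minus_self[of B] by linarith
  qed
  have gs_lim: "(\<lambda>m. sX (gs m) x) \<longlonglongrightarrow> IS x" if x: "x \<in> space MX" for x
  proof -
    have dec: "decseq (\<lambda>m. sX (gs m) x)"
      by (rule decseq_SucI) (simp add: gs_def sel_dec cc_sX[symmetric] del: sel.simps)
    have bdd: "bdd_below (range (\<lambda>m. sX (gs m) x))" using gs_lb[OF x] by (auto simp: bdd_below_def)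
    have bddt: "bdd_below (range (\<lambda>n. cc (t n) x))" using cs_lb[OF x] by (auto simp: bdd_below_def cc_def)
    have "(INF m. sX (gs m) x) = IS x"
    proof (rule antisym)
      show "(INF m. sX (gs m) x) \<le> IS x" unfolding IS_t[OF x]
      proof (rule cINF_greatest)
        fix n
        have "(INF m. sX (gs m) x) \<le> sX (gs n) x" by (rule cINF_lower[OF bdd]) simp
        also have "\<dots> \<le> cc (t n) x" using sel_le[of n n cc t x] unfolding gs_def cc_sX by simp
        finally show "(INF m. sX (gs m) x) \<le> cc (t n) x" .
      qed simp
      show "IS x \<le> (INF m. sX (gs m) x)" unfolding IS_t[OF x]
      proof (rule cINF_greatest)
        fix m
        obtain n where "gs m x = t n" using sel_val[of t cc m x] unfolding gs_def by blast
        then have "sX (gs m) x = cc (t n) x" by (simp add: cc_sX[symmetric])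
        then show "(INF n. cc (t n) x) \<le> sX (gs m) x" using cINF_lower[OF bddt] by simp
      qed simp
    qed
    then show ?thesis using LIMSEQ_decseq_INF[OF bdd dec] by simp
  qed
  have ISm: "IS \<in> borel_measurable MX"
    by (rule borel_measurable_LIMSEQ_real[OF gs_lim]) (simp_all add: sXm gsm)
  have conv: "(\<lambda>m. \<integral>x. sX (gs m) x \<partial>P) \<longlonglongrightarrow> (\<integral>x. IS x \<partial>P)"
    and gs_int: "\<And>m. integrable P (sX (gs m))"
  proof -
    have a1: "IS \<in> borel_measurable P" using ISm mP by blast
    have a2: "\<And>m. sX (gs m) \<in> borel_measurable P" using sXm[OF gsm] mP by blast
    have a3: "integrable P (\<lambda>x. \<bar>B\<bar> + K)" by simp
    have a4: "AE x in P. (\<lambda>m. sX (gs m) x) \<longlonglongrightarrow> IS x" using gs_lim sP by auto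
    have a5: "\<And>m. AE x in P. norm (sX (gs m) x) \<le> \<bar>B\<bar> + K" using gs_bnd sP by auto
    show "(\<lambda>m. \<integral>x. sX (gs m) x \<partial>P) \<longlonglongrightarrow> (\<integral>x. IS x \<partial>P)"
      by (rule integral_dominated_convergence[OF a1 a2 a3 a4 a5])
    show "\<And>m. integrable P (sX (gs m))"
      by (rule integrable_dominated_convergence2[OF a1 a2 a3 a4 a5])
  qed
  have RPhi_star: "(INF g\<in>SF. risk_Phi D Phi g) \<le> ereal (\<integral>x. IS x \<partial>P)"
  proof (rule LIMSEQ_le_const[OF tendsto_ereal[OF conv]])
    show "\<exists>N. \<forall>n\<ge>N. (INF g\<in>SF. risk_Phi D Phi g) \<le> ereal (\<integral>x. sX (gs n) x \<partial>P)"
    proof (intro exI allI impI)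
      fix n
      have "(INF g\<in>SF. risk_Phi D Phi g) \<le> risk_Phi D Phi (gs n)" by (rule INF_lower[OF gsSF])
      also have "\<dots> = ereal (\<integral>x. sX (gs n) x \<partial>P)" by (rule riskPhi_int[OF gsm gs_int])
      finally show "(INF g\<in>SF. risk_Phi D Phi g) \<le> ereal (\<integral>x. sX (gs n) x \<partial>P)" .
    qed
  qed
  have fm: "f \<in> borel_measurable MX" by (rule SFm[OF fSF])
  have RPhi_f_fin: "risk_Phi D Phi f \<noteq> \<infinity>" using small_surr by auto
  have sXf_int: "integrable P (sX f)"
  proof -
    have fin: "(\<integral>\<^sup>+x. ennreal (sX f x - B) \<partial>P) \<noteq> top"
    proof
      assume "(\<integral>\<^sup>+x. ennreal (sX f x - B) \<partial>P) = top"
      then have "risk_Phi D Phi f = \<infinity>" using riskPhi[OF fm] by simp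
      then show False using RPhi_f_fin by simp
    qed
    have msub: "(\<lambda>x. sX f x - B) \<in> borel_measurable P"
      by (rule mP[OF borel_measurable_diff[OF sXm[OF fm] borel_measurable_const]])
    have "integrable P (\<lambda>x. sX f x - B)"
    proof (rule integrableI_nonneg[OF msub])
      show "AE x in P. 0 \<le> sX f x - B" using cs_lb sP by (auto simp: sX_def)
      show "(\<integral>\<^sup>+x. ennreal (sX f x - B) \<partial>P) < \<infinity>" using fin by (simp add: less_top)
    qed
    then have "integrable P (\<lambda>x. (sX f x - B) + B)" by (rule Bochner_Integration.integrable_add) simp
    then show ?thesis by simp
  qed
  have RPhi_f: "risk_Phi D Phi f = ereal (\<integral>x. sX f x \<partial>P)" by (rule riskPhi_int[OF fm sXf_int])
  have IS_le: "IS x \<le> sX f x" if x: "x \<in> space MX" for x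
    unfolding IS_def sX_def
    by (rule cINF_lower) (use cs_lb[OF x] SFF[OF fSF x] in \<open>auto simp: bdd_below_def\<close>)
  have IS_int: "integrable P IS"
  proof (rule Bochner_Integration.integrable_bound)
    show "integrable P (\<lambda>x. \<bar>sX f x\<bar> + \<bar>B\<bar>)" using sXf_int by simp
    show "IS \<in> borel_measurable P" using ISm mP by blast
    show "AE x in P. norm (IS x) \<le> norm (\<bar>sX f x\<bar> + \<bar>B\<bar>)"
    proof (rule AE_I2)
      fix x assume "x \<in> space P"
      then have x: "x \<in> space MX" using sP by simp
      have "B \<le> IS x" unfolding IS_def by (rule cINF_greatest[OF Fne]) (use cs_lb[OF x] in auto)
      then show "norm (IS x) \<le> norm (\<bar>sX f x\<bar> + \<bar>B\<bar>)" using IS_le[OF x] by auto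
    qed
  qed
  have RL_star: "ereal (\<integral>x. IL x \<partial>P) \<le> (INF g\<in>SF. risk_L D L g)"
  proof (rule INF_greatest)
    fix g assume g: "g \<in> SF"
    have "(\<integral>x. IL x \<partial>P) \<le> (\<integral>x. lX g x \<partial>P)"
      by (rule integral_mono[OF IL_int lX_int[OF SFm[OF g]]]) (use IL_le SFF[OF g] sP in \<open>auto simp: lX_def\<close>)
    then show "ereal (\<integral>x. IL x \<partial>P) \<le> risk_L D L g" using riskL_int[OF SFm[OF g]] by simp
  qed
  have "ereal (\<integral>x. IL x \<partial>P) + ereal eps \<le> (INF g\<in>SF. risk_L D L g) + ereal eps"
    using RL_star by (rule add_right_mono)
  also have "\<dots> \<le> risk_L D L f" using contra unfolding SF_def by simp
  also have "\<dots> = ereal (\<integral>x. lX f x \<partial>P)" by (rule riskL_int[OF fm])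
  finally have m_ge: "(\<integral>x. IL x \<partial>P) + eps \<le> (\<integral>x. lX f x \<partial>P)" by simp
  define dl where "dl x = lX f x - IL x" for x
  define dp where "dp x = sX f x - IS x" for x
  have dl_int: "integrable P dl" unfolding dl_def using lX_int[OF fm] IL_int by simp
  have dp_int: "integrable P dp" unfolding dp_def using sXf_int IS_int by simp
  have m_def: "(\<integral>x. dl x \<partial>P) = (\<integral>x. lX f x \<partial>P) - (\<integral>x. IL x \<partial>P)"
    unfolding dl_def using lX_int[OF fm] IL_int by simp
  have m_eps: "eps \<le> (\<integral>x. dl x \<partial>P)" using m_ge m_def by simp
  have dp_eq: "(\<integral>x. dp x \<partial>P) = (\<integral>x. sX f x \<partial>P) - (\<integral>x. IS x \<partial>P)"
    unfolding dp_def using sXf_int IS_int by simp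
  have dl0: "0 \<le> dl x" if x: "x \<in> space MX" for x
    using IL_le[OF x SFF[OF fSF x]] unfolding dl_def lX_def by simp
  have pw: "Hc (dl x) \<le> ereal (dp x)" if x: "x \<in> space MX" for x
  proof -
    have "Hc (dl x) \<le> calib Phi L F (dl x)" by (rule Hc_le[OF dl0[OF x]])
    also have "\<dots> \<le> ereal (dp x)" unfolding calib_def
    proof (rule Inf_lower)
      have "excess_risk L F (f x) (Q x) = dl x" unfolding excess_risk_def dl_def lX_def IL_def ..
      moreover have "excess_surr Phi F (f x) (Q x) = dp x" unfolding excess_surr_def dp_def sX_def IS_def ..
      ultimately show "ereal (dp x) \<in> {ereal (excess_surr Phi F f q) |f q. f \<in> F \<and> q \<in> prob_simplex \<and> dl x \<le> excess_risk L F f q}"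
        using SFF[OF fSF x] QS[OF x] by (intro CollectI exI[of _ "f x"] exI[of _ "Q x"]) auto
    qed
    finally show ?thesis .
  qed
  define he where "he = real_of_ereal (Hc eps)"
  have Hce: "Hc eps = ereal he" unfolding he_def using Hc_fin by (simp add: ereal_real')
  have key: "he \<le> (\<integral>x. dp x \<partial>P)"
  proof (cases "\<exists>x0\<in>space MX. eps < dl x0")
    case True
    then obtain x0 where x0: "x0 \<in> space MX" "eps < dl x0" by blast
    have fin0: "\<bar>Hc (dl x0)\<bar> \<noteq> \<infinity>"
      using pw[OF x0(1)] Hc_nonneg[OF dl0[OF x0(1)]] by auto
    have "\<exists>s\<ge>0. \<forall>e\<ge>0. ereal (real_of_ereal (Hc eps) + s * (e - eps)) \<le> Hc e"
      by (rule support[OF Hc_convex _ _ eps_pos x0(2) fin0]) (use Hc_mono Hc_nonneg in auto)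
    then obtain s where s0: "0 \<le> s" and sup0: "\<forall>e\<ge>0. ereal (he + s * (e - eps)) \<le> Hc e"
      unfolding he_def by (elim exE conjE)
    have sup: "\<And>e. 0 \<le> e \<Longrightarrow> ereal (he + s * (e - eps)) \<le> Hc e" using sup0 by simp
    have lin: "he + s * (dl x - eps) \<le> dp x" if x: "x \<in> space MX" for x
    proof -
      have "ereal (he + s * (dl x - eps)) \<le> ereal (dp x)" using sup[OF dl0[OF x]] pw[OF x] by (rule order.trans)
      then show ?thesis by simp
    qed
    have "(\<integral>x. he + s * (dl x - eps) \<partial>P) \<le> (\<integral>x. dp x \<partial>P)"
      by (rule integral_mono) (use dl_int dp_int lin sP in auto)
    moreover have "(\<integral>x. he + s * (dl x - eps) \<partial>P) = he + s * ((\<integral>x. dl x \<partial>P) - eps)"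
      using dl_int by (simp add: P.prob_space algebra_simps)
    moreover have "0 \<le> s * ((\<integral>x. dl x \<partial>P) - eps)" using s0 m_eps by simp
    ultimately show ?thesis by linarith
  next
    case False
    then have le: "dl x \<le> eps" if "x \<in> space MX" for x using that by (simp add: not_less)
    have i0: "(\<integral>x. eps - dl x \<partial>P) = 0"
    proof -
      have "(\<integral>x. eps - dl x \<partial>P) = eps - (\<integral>x. dl x \<partial>P)" using dl_int by (simp add: P.prob_space)
      moreover have "0 \<le> (\<integral>x. eps - dl x \<partial>P)" by (rule integral_nonneg_AE) (use le sP in auto)
      ultimately show ?thesis using m_eps by linarith
    qed
    have "AE x in P. eps - dl x = 0"
      using integral_nonneg_eq_0_iff_AE[of P "\<lambda>x. eps - dl x"] i0 dl_int le sP by auto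
    then have "AE x in P. he \<le> dp x" using AE_space[of P]
    proof eventually_elim
      case (elim x)
      then have "ereal he \<le> ereal (dp x)" using pw[of x] Hce sP by simp
      then show "he \<le> dp x" by simp
    qed
    then have "(\<integral>x. he \<partial>P) \<le> (\<integral>x. dp x \<partial>P)" by (intro integral_mono_AE dp_int) simp_all
    then show ?thesis by (simp add: P.prob_space)
  qed
  have "(INF g\<in>SF. risk_Phi D Phi g) + Hc eps \<le> ereal (\<integral>x. IS x \<partial>P) + ereal he"
    unfolding Hce by (rule add_right_mono[OF RPhi_star])
  also have "\<dots> \<le> ereal (\<integral>x. sX f x \<partial>P)" using key dp_eq by simp
  also have "\<dots> = risk_Phi D Phi f" using RPhi_f by simp
  finally show False using small_surr unfolding SF_def by simp
qed

end
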